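(* In the setting described in the context, for every $\varepsilon>0$ and every $\delta\in(0,\eta]$, $$\|\nabla\varphi_j\|_{L^2(D_\delta)}^2\le\lambda_j(\varepsilon,\delta)\,\varepsilon\qquad\text{for all } j\ge1,$$ where $(\lambda_j,\varphi_j)$ are the eigenpairs defined in the context (for the given $\varepsilon,\delta$).
   Context: Let $\Omega\subset\mathbb{R}^d$ be a bounded connected Lipschitz domain; $\langle\cdot,\cdot\rangle$ and $\|\cdot\|$ denote the $L^2(\Omega)$ inner product and norm, $|\cdot|$ the Euclidean norm, $\mathcal{H}^{d-1}$ the $(d-1)$-dimensional Hausdorff measure. Weight: for each $\varepsilon>0$, $\hat\mu_\varepsilon:[0,\infty)\to\mathbb{R}$ is non-increasing with $\hat\mu_\varepsilon(0)=\varepsilon^{-1}$, $\hat\mu_\varepsilon(t)>0$ and $t\hat\mu_\varepsilon(t)\le1$ for all $t\ge0$; for $w$ with $\nabla w\in L^\infty(\Omega)$ put $\mu_\varepsilon[w](x)=\hat\mu_\varepsilon(|\nabla w(x)|)$. Medium: $u=u^0+\widetilde u$ with $u^0=\sum_{m=1}^M\hat u^{0,m}\chi^{0,m}$, where $\hat u^{0,m}\in\mathbb{R}$ and $\chi^{0,m}$ is the characteristic function of $A^{0,m}$, the $A^{0,m}$ being mutually disjoint connected open sets with $\overline\Omega\subset\overline{\bigcup_m A^{0,m}}$ and $\mathcal{H}^{d-1}(\partial A^{0,m}\cap\partial\Omega)>0$; and $\widetilde u=\sum_{k=1}^K\hat u^k\chi^k$ with $\hat u^k\neq0$, $\chi^k$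 the characteristic function of a connected open set $A^k$ compactly contained in $\Omega\setminus S$, where $S=(\bigcup_m\partial A^{0,m})\setminus\partial\Omega$; the boundaries $\partial A^1,\dots,\partial A^K$ are mutually disjoint. For $\delta>0$: $S_\delta=\{x\in\Omega:\operatorname{dist}(x,S)<\delta\}$, $U^k_\delta=\{x\in\Omega:\operatorname{dist}(x,\partial A^k)<\delta\}$, $U_\delta=\bigcup_{k=1}^K U^k_\delta$, $D_\delta=\Omega\setminus\overline{U_\delta\cup S_\delta}$, $A^k_\delta=(\Omega\setminus\overline{U^k_\delta})\cap A^k$, $A_\delta=\bigcup_k A^k_\delta$. Approximation: $\mathcal{V}^\delta\subset H^1(\Omega)$ is a closed subspace, $\mathcal{V}^\delta_0=\mathcal{V}^\delta\cap H^1_0(\Omega)$; $\chi^{0,m}_\delta\in\mathcal{V}^\delta$ and $\chi^k_\delta\in\mathcal{V}^\delta_0$ converge in $L^2(\Omega)$ to $\chi^{0,m}$, $\chi^k$ as $\delta\to0$; $u^0_\delta=\sum_m\hat u^{0,m}\chi^{0,m}_\delta$, $\widetilde u_\delta=\sum_k\hat u^k\chi^k_\delta$, $u_\delta=u^0_\delta+\widetilde u_\delta$. Standing assumptions: $\eta>0$ is such that $A^k_\eta\neq\emptyset$ for all $k$, $\overline{S_\eta}\cap\overline{U_\eta}=\emptyset$, $\overline{U^k_\eta}\cap\overline{U^j_\eta}=\emptyset$ for $k\ne j$, and every connected component $E$ of $D_\eta\setminus A_\eta$ satisfies $\mathcal{H}^{d-1}(\partial E\cap\partial\Omega)>0$.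 For all $\delta\in(0,\eta]$: $\nabla\chi^{0,m}_\delta\in L^\infty(\Omega)$ with $\operatorname{supp}\nabla\chi^{0,m}_\delta\subset\overline{S_\delta}$, and $\nabla\chi^k_\delta\in L^\infty(\Omega)$ with $\operatorname{supp}\nabla\chi^k_\delta\subset\overline{U^k_\delta}$. Eigenproblem: $B[v,w]=\langle\mu_\varepsilon[u_\delta]\nabla v,\nabla w\rangle$. A real $\lambda$ is an eigenvalue if there is $0\ne\varphi\in\mathcal{V}^\delta_0$ with $B[\varphi,v]=\lambda\langle\varphi,v\rangle$ for all $v\in\mathcal{V}^\delta_0$. $(\lambda_j)_{j\ge1}=(\lambda_j(\varepsilon,\delta))$ is the nondecreasing sequence of eigenvalues repeated according to multiplicity, and $(\varphi_j)_{j\ge1}$ is a corresponding basis of eigenfunctions of $\mathcal{V}^\delta_0$, orthonormal in $L^2(\Omega)$. *)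

theory Defs
  imports "HOL-Analysis.Analysis"
begin

definition L2 :: "'a::euclidean_space set \<Rightarrow> ('a \<Rightarrow> real) \<Rightarrow> bool" where
  "L2 \<Omega> f \<longleftrightarrow> set_borel_measurable lebesgue \<Omega> f \<and> set_integrable lebesgue \<Omega> (\<lambda>x. (f x)^2)"

definition L2v :: "'a::euclidean_space set \<Rightarrow> ('a \<Rightarrow> 'a) \<Rightarrow> bool" where
  "L2v \<Omega> G \<longleftrightarrow> set_borel_measurable lebesgue \<Omega> G \<and> set_integrable lebesgue \<Omega> (\<lambda>x. (norm (G x))^2)"

definition l2inner :: "'a::euclidean_space set \<Rightarrow> ('a \<Rightarrow> real) \<Rightarrow> ('a \<Rightarrow> real) \<Rightarrow> real" where
  "l2inner \<Omega> f g = (LINT x:\<Omega>|lebesgue. f x * g x)"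

definition test_fn :: "'a::euclidean_space set \<Rightarrow> ('a \<Rightarrow> real) \<Rightarrow> ('a \<Rightarrow> 'a) \<Rightarrow> bool" where
  "test_fn \<Omega> \<psi> g \<longleftrightarrow> (\<forall>x. GDERIV \<psi> x :> g x) \<and> continuous_on UNIV g \<and>
     compact (closure {x. \<psi> x \<noteq> 0}) \<and> closure {x. \<psi> x \<noteq> 0} \<subseteq> \<Omega>"

definition is_weak_grad :: "'a::euclidean_space set \<Rightarrow> ('a \<Rightarrow> real) \<Rightarrow> ('a \<Rightarrow> 'a) \<Rightarrow> bool" where
  "is_weak_grad \<Omega> f G \<longleftrightarrow> (\<forall>\<psi> g. test_fn \<Omega> \<psi> g \<longrightarrow>
     (LINT x:\<Omega>|lebesgue. f x *\<^sub>R g x) = - (LINT x:\<Omega>|lebesgue. \<psi> x *\<^sub>R G x))"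

definition H1 :: "'a::euclidean_space set \<Rightarrow> ('a \<Rightarrow> real) \<Rightarrow> bool" where
  "H1 \<Omega> f \<longleftrightarrow> L2 \<Omega> f \<and> (\<exists>G. L2v \<Omega> G \<and> is_weak_grad \<Omega> f G)"

text \<open>The weak gradient (a chosen representative; unique a.e.).\<close>
definition wgrad :: "'a::euclidean_space set \<Rightarrow> ('a \<Rightarrow> real) \<Rightarrow> 'a \<Rightarrow> 'a" where
  "wgrad \<Omega> f = (SOME G. L2v \<Omega> G \<and> is_weak_grad \<Omega> f G)"

definition h1dist :: "'a::euclidean_space set \<Rightarrow> ('a \<Rightarrow> real) \<Rightarrow> ('a \<Rightarrow> real) \<Rightarrow> real" where
  "h1dist \<Omega> f g = (LINT x:\<Omega>|lebesgue. (f x - g x)^2)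
     + (LINT x:\<Omega>|lebesgue. (norm (wgrad \<Omega> f x - wgrad \<Omega> g x))^2)"

definition H10 :: "'a::euclidean_space set \<Rightarrow> ('a \<Rightarrow> real) \<Rightarrow> bool" where
  "H10 \<Omega> f \<longleftrightarrow> H1 \<Omega> f \<and> (\<exists>\<psi> g. (\<forall>k. test_fn \<Omega> (\<psi> k) (g k)) \<and>
     (\<lambda>k. (LINT x:\<Omega>|lebesgue. (\<psi> k x - f x)^2)
        + (LINT x:\<Omega>|lebesgue. (norm (g k x - wgrad \<Omega> f x))^2)) \<longlonglongrightarrow> 0)"

definition closed_subspace_H1 :: "'a::euclidean_space set \<Rightarrow> ('a \<Rightarrow> real) set \<Rightarrow> bool" where
  "closed_subspace_H1 \<Omega> V \<longleftrightarrow> V \<subseteq> {f. H1 \<Omega> f} \<and> (\<lambda>x. 0) \<in> V \<and>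
     (\<forall>f\<in>V. \<forall>g\<in>V. (\<lambda>x. f x + g x) \<in> V) \<and> (\<forall>c. \<forall>f\<in>V. (\<lambda>x. c * f x) \<in> V) \<and>
     (\<forall>fs f. (\<forall>k. fs k \<in> V) \<and> H1 \<Omega> f \<and> (\<lambda>k. h1dist \<Omega> (fs k) f) \<longlonglongrightarrow> 0 \<longrightarrow> f \<in> V)"

definition grad_Linf :: "'a::euclidean_space set \<Rightarrow> ('a \<Rightarrow> real) \<Rightarrow> bool" where
  "grad_Linf \<Omega> f \<longleftrightarrow> (\<exists>C. AE x in lebesgue. x \<in> \<Omega> \<longrightarrow> norm (wgrad \<Omega> f x) \<le> C)"

definition grad_supp_in :: "'a::euclidean_space set \<Rightarrow> ('a \<Rightarrow> real) \<Rightarrow> 'a set \<Rightarrow> bool" where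
  "grad_supp_in \<Omega> f T \<longleftrightarrow> (AE x in lebesgue. x \<in> \<Omega> - T \<longrightarrow> wgrad \<Omega> f x = 0)"

definition nbhd :: "'a::euclidean_space set \<Rightarrow> 'a set \<Rightarrow> real \<Rightarrow> 'a set" where
  "nbhd \<Omega> T d = {x\<in>\<Omega>. \<exists>y\<in>T. dist x y < d}"

definition unit_ball_vol :: "nat \<Rightarrow> real" where
  "unit_ball_vol s = pi powr (real s / 2) / Gamma (real s / 2 + 1)"

definition hausdorff_pre :: "nat \<Rightarrow> real \<Rightarrow> 'a::euclidean_space set \<Rightarrow> ennreal" where
  "hausdorff_pre s d A = (INF C \<in> {C :: nat \<Rightarrow> 'a set. A \<subseteq> (\<Union>i. C i) \<and> (\<forall>i. bounded (C i) \<and> diameter (C i) \<le> d)}.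
      (\<Sum>i. ennreal (if C i = {} then 0 else unit_ball_vol s * (diameter (C i) / 2) ^ s)))"

definition hausdorff :: "nat \<Rightarrow> 'a::euclidean_space set \<Rightarrow> ennreal" where
  "hausdorff s A = (SUP d \<in> {0<..}. hausdorff_pre s d A)"

text \<open>Lipschitz domain: open, boundary locally the graph of a Lipschitz function.\<close>
definition lipschitz_domain :: "'a::euclidean_space set \<Rightarrow> bool" where
  "lipschitz_domain \<Omega> \<longleftrightarrow> open \<Omega> \<and> (\<forall>p\<in>frontier \<Omega>. \<exists>r>0. \<exists>e L h. norm e = 1 \<and>
     L-lipschitz_on UNIV (h :: 'a \<Rightarrow> real) \<and> (\<forall>x. h x = h (x - (x \<bullet> e) *\<^sub>R e)) \<and>
     \<Omega> \<inter> ball p r = {x \<in> ball p r. x \<bullet> e < h x})"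

definition bilin :: "'a::euclidean_space set \<Rightarrow> (real \<Rightarrow> real) \<Rightarrow> ('a \<Rightarrow> real) \<Rightarrow> ('a \<Rightarrow> real) \<Rightarrow> ('a \<Rightarrow> real) \<Rightarrow> real" where
  "bilin \<Omega> \<mu> w v z = (LINT x:\<Omega>|lebesgue. \<mu> (norm (wgrad \<Omega> w x)) * (wgrad \<Omega> v x \<bullet> wgrad \<Omega> z x))"

text \<open>(lam j, phi j), j in J = {1..} (or {1..N} if V0 is finite dimensional): nondecreasing
  eigenvalues with an L2-orthonormal basis of eigenfunctions of V0.\<close>
definition eigen_seq :: "'a::euclidean_space set \<Rightarrow> ('a \<Rightarrow> real) set \<Rightarrow> (('a \<Rightarrow> real) \<Rightarrow> ('a \<Rightarrow> real) \<Rightarrow> real)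
    \<Rightarrow> nat set \<Rightarrow> (nat \<Rightarrow> real) \<Rightarrow> (nat \<Rightarrow> 'a \<Rightarrow> real) \<Rightarrow> bool" where
  "eigen_seq \<Omega> V0 B J lam phi \<longleftrightarrow>
     (J = {1..} \<or> (\<exists>N. J = {1..N})) \<and>
     (\<forall>j\<in>J. phi j \<in> V0 \<and> (\<forall>v\<in>V0. B (phi j) v = lam j * l2inner \<Omega> (phi j) v)) \<and>
     (\<forall>i\<in>J. \<forall>j\<in>J. l2inner \<Omega> (phi i) (phi j) = (if i = j then 1 else 0)) \<and>
     (\<forall>i\<in>J. \<forall>j\<in>J. i \<le> j \<longrightarrow> lam i \<le> lam j) \<and>
     (\<forall>v\<in>V0. \<forall>e>0. \<exists>F c. finite F \<and> F \<subseteq> J \<and>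
        (LINT x:\<Omega>|lebesgue. (v x - (\<Sum>j\<in>F. c j * phi j x))^2) < e)"


definition Sset :: "'a::euclidean_space set \<Rightarrow> nat \<Rightarrow> (nat \<Rightarrow> 'a set) \<Rightarrow> 'a set" where
  "Sset \<Omega> M A0 = (\<Union>m\<in>{1..M}. frontier (A0 m)) - frontier \<Omega>"
definition Sdel :: "'a::euclidean_space set \<Rightarrow> nat \<Rightarrow> (nat \<Rightarrow> 'a set) \<Rightarrow> real \<Rightarrow> 'a set" where
  "Sdel \<Omega> M A0 t = nbhd \<Omega> (Sset \<Omega> M A0) t"
definition Udel :: "'a::euclidean_space set \<Rightarrow> (nat \<Rightarrow> 'a set) \<Rightarrow> nat \<Rightarrow> real \<Rightarrow> 'a set" where
  "Udel \<Omega> A k t = nbhd \<Omega> (frontier (A k)) t"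
definition Uall :: "'a::euclidean_space set \<Rightarrow> nat \<Rightarrow> (nat \<Rightarrow> 'a set) \<Rightarrow> real \<Rightarrow> 'a set" where
  "Uall \<Omega> K A t = (\<Union>k\<in>{1..K}. Udel \<Omega> A k t)"
definition Ddel :: "'a::euclidean_space set \<Rightarrow> nat \<Rightarrow> (nat \<Rightarrow> 'a set) \<Rightarrow> nat \<Rightarrow> (nat \<Rightarrow> 'a set) \<Rightarrow> real \<Rightarrow> 'a set" where
  "Ddel \<Omega> M A0 K A t = \<Omega> - closure (Uall \<Omega> K A t \<union> Sdel \<Omega> M A0 t)"
definition Adel :: "'a::euclidean_space set \<Rightarrow> (nat \<Rightarrow> 'a set) \<Rightarrow> nat \<Rightarrow> real \<Rightarrow> 'a set" where
  "Adel \<Omega> A k t = (\<Omega> - closure (Udel \<Omega> A k t)) \<inter> A k"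
definition Aall :: "'a::euclidean_space set \<Rightarrow> nat \<Rightarrow> (nat \<Rightarrow> 'a set) \<Rightarrow> real \<Rightarrow> 'a set" where
  "Aall \<Omega> K A t = (\<Union>k\<in>{1..K}. Adel \<Omega> A k t)"

end

theory Submission
  imports Defs
begin

definition pp :: "real \<Rightarrow> real" where "pp t = (max 0 t)^2"

lemma pp_deriv: "(pp has_real_derivative 2 * max 0 x) (at x)"
proof (cases "x = 0")
  case True
  have "((\<lambda>y. (pp y - pp 0) / (y - 0)) \<longlongrightarrow> 2 * max 0 0) (at 0)"
  proof -
    have "((\<lambda>y. max 0 y) \<longlongrightarrow> max 0 0) (at (0::real))"
      by (intro tendsto_intros)
    then have "((\<lambda>y::real. max 0 y) \<longlongrightarrow> 2 * max 0 0) (at (0::real))" by simp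
    moreover have "\<forall>\<^sub>F y in at 0. max 0 y = (pp y - pp 0) / (y - 0)"
      unfolding eventually_at_filter by (auto simp: pp_def power2_eq_square max_def)
    ultimately show ?thesis using Lim_transform_eventually by fastforce
  qed
  then show ?thesis using True by (simp add: has_field_derivative_iff)
next
  case False
  show ?thesis
  proof (cases "x < 0")
    case True
    have "((\<lambda>t. 0) has_real_derivative 2 * max 0 x) (at x)" using True by simp
    then show ?thesis
      apply (rule has_field_derivative_transform_within_open[where S="{..<0}"])
      using True by (auto simp: pp_def)
  next
    case F: False
    then have "x > 0" using False by auto
    have "((\<lambda>t. t^2) has_real_derivative 2 * max 0 x) (at x)" using \<open>x>0\<close> by (auto intro!: derivative_eq_intros)
    then show ?thesis
      apply (rule has_field_derivative_transform_within_open[where S="{0<..}"])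
      using \<open>x>0\<close> by (auto simp: pp_def)
  qed
qed

definition ss :: "real \<Rightarrow> real" where "ss t = 2 * pp t - 4 * pp (t - 1/2) + 2 * pp (t - 1)"
definition ss' :: "real \<Rightarrow> real" where "ss' t = 4 * max 0 t - 8 * max 0 (t - 1/2) + 4 * max 0 (t - 1)"

lemma ss_deriv: "(ss has_real_derivative ss' x) (at x)"
proof -
  have d1: "((\<lambda>t. pp (t - c)) has_real_derivative 2 * max 0 (x - c)) (at x)" for c
  proof -
    have "((\<lambda>t. t - c) has_real_derivative 1) (at x)" by (auto intro!: derivative_eq_intros)
    from DERIV_chain2[OF pp_deriv this] show ?thesis by simp
  qed
  have "((\<lambda>t. 2 * pp (t - 0) - 4 * pp (t - 1/2) + 2 * pp (t - 1)) has_real_derivative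
      2 * (2 * max 0 (x - 0)) - 4 * (2 * max 0 (x - 1/2)) + 2 * (2 * max 0 (x - 1))) (at x)"
    by (intro DERIV_add DERIV_diff DERIV_cmult d1)
  then show ?thesis unfolding ss_def[abs_def] ss'_def by (simp add: algebra_simps)
qed

lemma ss'_cont: "continuous_on UNIV ss'"
  unfolding ss'_def by (intro continuous_intros)

lemma ss_cont: "continuous_on UNIV ss"
  unfolding ss_def pp_def by (intro continuous_intros)

lemma ss_le0: "t \<le> 0 \<Longrightarrow> ss t = 0"
  by (simp add: ss_def pp_def)

lemma ss_ge1: "t \<ge> 1 \<Longrightarrow> ss t = 1"
  by (simp add: ss_def pp_def power2_eq_square algebra_simps)

lemma ss_pos: "t > 0 \<Longrightarrow> ss t > 0"
proof -
  assume t: "t > 0"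
  consider "t \<le> 1/2" | "1/2 < t \<and> t < 1" | "t \<ge> 1" by linarith
  then show ?thesis
  proof cases
    case 1 then show ?thesis using t by (simp add: ss_def pp_def)
  next
    case 2
    then have "ss t = 1 - 2 * (1 - t)^2" by (simp add: ss_def pp_def power2_eq_square algebra_simps)
    moreover have "(1 - t)*(1-t) < (1/2)*(1/2)" using 2 by (intro mult_strict_mono) auto
    then have "(1 - t)^2 < 1/2" by (simp add: power2_eq_square)
    ultimately show ?thesis by simp
  next
    case 3 then show ?thesis by (simp add: ss_ge1)
  qed
qed

lemma ss_bounds: "0 \<le> ss t \<and> ss t \<le> 1"
proof -
  consider "t \<le> 0" | "0 < t \<and> t \<le> 1/2" | "1/2 < t \<and> t < 1" | "t \<ge> 1" by linarith
  then show ?thesis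
  proof cases
    case 1 then show ?thesis by (simp add: ss_le0)
  next
    case 2 then have "ss t = 2 * t^2" by (simp add: ss_def pp_def)
    moreover have "t*t \<le> (1/2)*(1/2)" using 2 by (intro mult_mono) auto
    then have "t^2 \<le> 1/4" by (simp add: power2_eq_square)
    ultimately show ?thesis by simp
  next
    case 3
    then have "ss t = 1 - 2 * (1 - t)^2" by (simp add: ss_def pp_def power2_eq_square algebra_simps)
    moreover have "(1 - t)*(1-t) < (1/2)*(1/2)" using 3 by (intro mult_strict_mono) auto
    then have "(1 - t)^2 < 1/2" by (simp add: power2_eq_square)
    ultimately show ?thesis by simp
  next
    case 4 then show ?thesis by (simp add: ss_ge1)
  qed
qed

definition gb :: "real \<Rightarrow> real \<Rightarrow> real \<Rightarrow> real \<Rightarrow> real" where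
  "gb n a b t = ss (n * (t - a) - 1) * ss (n * (b - t) - 1)"
definition gb' :: "real \<Rightarrow> real \<Rightarrow> real \<Rightarrow> real \<Rightarrow> real" where
  "gb' n a b t = n * ss' (n * (t - a) - 1) * ss (n * (b - t) - 1) - n * ss (n * (t - a) - 1) * ss' (n * (b - t) - 1)"

lemma gb_deriv: "(gb n a b has_real_derivative gb' n a b t) (at t)"
proof -
  have d1: "((\<lambda>t. ss (n * (t - a) - 1)) has_real_derivative ss' (n * (t - a) - 1) * n) (at t)"
  proof -
    have "((\<lambda>t. n * (t - a) - 1) has_real_derivative n) (at t)" by (auto intro!: derivative_eq_intros)
    from DERIV_chain2[OF ss_deriv this] show ?thesis by simp
  qed
  have d2: "((\<lambda>t. ss (n * (b - t) - 1)) has_real_derivative ss' (n * (b - t) - 1) * (- n)) (at t)"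
  proof -
    have "((\<lambda>t. n * (b - t) - 1) has_real_derivative - n) (at t)" by (auto intro!: derivative_eq_intros)
    from DERIV_chain2[OF ss_deriv this] show ?thesis by simp
  qed
  have "((\<lambda>t. ss (n * (t - a) - 1) * ss (n * (b - t) - 1)) has_real_derivative
     ss (n * (t - a) - 1) * (ss' (n * (b - t) - 1) * (- n)) + ss' (n * (t - a) - 1) * n * ss (n * (b - t) - 1)) (at t)"
    by (rule DERIV_mult'[OF d1 d2])
  then show ?thesis unfolding gb_def[abs_def] gb'_def by (simp add: algebra_simps)
qed

lemma gb_cont: "continuous_on UNIV (gb n a b)"
  unfolding gb_def[abs_def] by (intro continuous_intros continuous_on_compose2[OF ss_cont]) auto

lemma gb'_cont: "continuous_on UNIV (gb' n a b)"
  unfolding gb'_def[abs_def] by (intro continuous_intros continuous_on_compose2[OF ss_cont] continuous_on_compose2[OF ss'_cont]) auto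

lemma gb_bounds: "0 \<le> gb n a b t \<and> gb n a b t \<le> 1"
  unfolding gb_def using ss_bounds[of "n * (t - a) - 1"] ss_bounds[of "n * (b - t) - 1"]
  by (auto intro: mult_nonneg_nonneg mult_le_one)

lemma gb_nz: "n > 0 \<Longrightarrow> gb n a b t \<noteq> 0 \<Longrightarrow> a + 1/n \<le> t \<and> t \<le> b - 1/n"
proof -
  assume n: "n > 0" and nz: "gb n a b t \<noteq> 0"
  then have "n * (t - a) - 1 > 0" "n * (b - t) - 1 > 0"
    unfolding gb_def by (metis mult_zero_left mult_zero_right not_less ss_le0)+
  then have "1/n < t - a" "1/n < b - t" using n by (auto simp: field_simps)
  then show ?thesis by auto
qed

lemma gb_out: "n > 0 \<Longrightarrow> \<not> (a < t \<and> t < b) \<Longrightarrow> gb n a b t = 0"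
proof -
  assume n: "n > 0" and o: "\<not> (a < t \<and> t < b)"
  then have "n * (t - a) \<le> 0 \<or> n * (b - t) \<le> 0"
    by (auto simp: mult_le_0_iff)
  then show ?thesis unfolding gb_def by (auto simp: ss_le0)
qed

lemma gb_lim: "a < t \<Longrightarrow> t < b \<Longrightarrow> eventually (\<lambda>k. gb (real (Suc k)) a b t = 1) sequentially"
proof -
  assume at: "a < t" and tb: "t < b"
  obtain N :: nat where N: "real N \<ge> max (2 / (t - a)) (2 / (b - t))" using real_arch_simple by blast
  show ?thesis unfolding eventually_sequentially
  proof (intro exI allI impI)
    fix k assume "N \<le> k"
    then have k: "real (Suc k) \<ge> 2 / (t - a)" "real (Suc k) \<ge> 2 / (b - t)" using N by auto
    have "real (Suc k) * (t - a) \<ge> 2" using k(1) at by (simp add: field_simps)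
    moreover have "real (Suc k) * (b - t) \<ge> 2" using k(2) tb by (simp add: field_simps)
    ultimately show "gb (real (Suc k)) a b t = 1" unfolding gb_def by (simp add: ss_ge1)
  qed
qed

lemma GDERIV_prod:
  assumes "finite I" "\<And>i. i \<in> I \<Longrightarrow> GDERIV (f i) x :> df i"
  shows "GDERIV (\<lambda>x. \<Prod>i\<in>I. f i x) x :> (\<Sum>i\<in>I. (\<Prod>j\<in>I-{i}. f j x) *\<^sub>R df i)"
proof -
  have "((\<lambda>x. \<Prod>i\<in>I. f i x) has_derivative (\<lambda>y. \<Sum>i\<in>I. (y \<bullet> df i) * (\<Prod>j\<in>I - {i}. f j x))) (at x)"
    by (rule has_derivative_prod) (use assms(2) in \<open>auto simp: gderiv_def\<close>)
  then show ?thesis unfolding gderiv_def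
    by (rule has_derivative_subst) (auto simp: inner_sum_right mult.commute)
qed

lemma GDERIV_coord: "GDERIV (\<lambda>x. x \<bullet> i) x :> i"
  unfolding gderiv_def by (auto intro!: derivative_eq_intros)

definition psi :: "nat \<Rightarrow> 'a::euclidean_space \<Rightarrow> 'a \<Rightarrow> 'a \<Rightarrow> real" where
  "psi k a b x = (\<Prod>i\<in>Basis. gb (real (Suc k)) (a \<bullet> i) (b \<bullet> i) (x \<bullet> i))"
definition dpsi :: "nat \<Rightarrow> 'a::euclidean_space \<Rightarrow> 'a \<Rightarrow> 'a \<Rightarrow> 'a" where
  "dpsi k a b x = (\<Sum>i\<in>Basis. (\<Prod>j\<in>Basis-{i}. gb (real (Suc k)) (a \<bullet> j) (b \<bullet> j) (x \<bullet> j))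
       *\<^sub>R (gb' (real (Suc k)) (a \<bullet> i) (b \<bullet> i) (x \<bullet> i) *\<^sub>R i))"

lemma gb_coord_cont: "continuous_on UNIV (\<lambda>x. gb n a b (x \<bullet> i))"
  by (rule continuous_on_compose2[OF gb_cont]) (auto intro: continuous_intros)
lemma gb'_coord_cont: "continuous_on UNIV (\<lambda>x. gb' n a b (x \<bullet> i))"
  by (rule continuous_on_compose2[OF gb'_cont]) (auto intro: continuous_intros)

lemma psi_cont: "continuous_on UNIV (psi k a b)"
  unfolding psi_def[abs_def] by (intro continuous_on_prod gb_coord_cont)

lemma psi_bounds: "0 \<le> psi k a b x \<and> psi k a b x \<le> 1"
  unfolding psi_def using gb_bounds by (auto intro: prod_nonneg prod_le_1)

lemma psi_test:
  assumes "box a b \<subseteq> D"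
  shows "test_fn D (psi k a b) (dpsi k a b)"
proof -
  define n where "n = real (Suc k)"
  have n: "n > 0" by (simp add: n_def)
  have gd: "GDERIV (psi k a b) x :> dpsi k a b x" for x
    unfolding psi_def[abs_def] dpsi_def
    by (rule GDERIV_prod) (auto intro: GDERIV_DERIV_compose[OF GDERIV_coord gb_deriv])
  have gc: "continuous_on UNIV (dpsi k a b)"
    unfolding dpsi_def[abs_def]
    by (intro continuous_intros continuous_on_prod gb_coord_cont gb'_coord_cont)
  define lo where "lo = (\<Sum>i\<in>Basis. (a \<bullet> i + 1/n) *\<^sub>R i)"
  define hi where "hi = (\<Sum>i\<in>Basis. (b \<bullet> i - 1/n) *\<^sub>R i)"
  have sub: "{x. psi k a b x \<noteq> 0} \<subseteq> cbox lo hi"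
  proof
    fix x assume "x \<in> {x. psi k a b x \<noteq> 0}"
    then have "\<forall>i\<in>Basis. gb n (a \<bullet> i) (b \<bullet> i) (x \<bullet> i) \<noteq> 0"
      unfolding psi_def n_def by auto
    then show "x \<in> cbox lo hi" using gb_nz[OF n]
      by (auto simp: mem_box lo_def hi_def inner_sum_left_Basis)
  qed
  have sub2: "cbox lo hi \<subseteq> box a b"
  proof
    fix x assume "x \<in> cbox lo hi"
    then have "\<forall>i\<in>Basis. a \<bullet> i + 1/n \<le> x \<bullet> i \<and> x \<bullet> i \<le> b \<bullet> i - 1/n"
      by (auto simp: mem_box lo_def hi_def inner_sum_left_Basis)
    moreover have p: "1/n > 0" using n by simp
    ultimately have "\<forall>i\<in>Basis. a \<bullet> i < x \<bullet> i \<and> x \<bullet> i < b \<bullet> i"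
      by (metis add.commute diff_add_cancel less_add_same_cancel2 order_less_le_trans order_le_less_trans)
    then show "x \<in> box a b" by (simp add: mem_box)
  qed
  have "closure {x. psi k a b x \<noteq> 0} \<subseteq> cbox lo hi"
    by (rule closure_minimal[OF sub closed_cbox])
  moreover have "compact (closure {x. psi k a b x \<noteq> 0})"
    using sub by (simp add: compact_closure bounded_subset[OF bounded_cbox])
  ultimately show ?thesis unfolding test_fn_def using gd gc sub2 assms by auto
qed

lemma psi_lim: "eventually (\<lambda>k. psi k a b x = indicator (box a b) x) sequentially"
proof (cases "x \<in> box a b")
  case True
  then have "\<forall>i\<in>Basis. a \<bullet> i < x \<bullet> i \<and> x \<bullet> i < b \<bullet> i" by (auto simp: mem_box)
  then have "\<forall>i\<in>Basis. eventually (\<lambda>k. gb (real (Suc k)) (a \<bullet> i) (b \<bullet> i) (x \<bullet> i) = 1) sequentially"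
    using gb_lim by blast
  then have "eventually (\<lambda>k. \<forall>i\<in>Basis. gb (real (Suc k)) (a \<bullet> i) (b \<bullet> i) (x \<bullet> i) = 1) sequentially"
    by (simp add: eventually_ball_finite)
  then show ?thesis
    by eventually_elim (use True in \<open>simp add: psi_def\<close>)
next
  case False
  then obtain i where i: "i \<in> Basis" "\<not> (a \<bullet> i < x \<bullet> i \<and> x \<bullet> i < b \<bullet> i)" by (auto simp: mem_box)
  have "psi k a b x = 0" for k
    unfolding psi_def using i gb_out[of "real (Suc k)" "a \<bullet> i" "x \<bullet> i" "b \<bullet> i"]
    by (intro prod_zero) auto
  then show ?thesis using False by simp
qed

lemma cont_meas_leb: "continuous_on UNIV (f :: 'a::euclidean_space \<Rightarrow> 'b::{second_countable_topology,metric_space}) \<Longrightarrow> f \<in> borel_measurable lebesgue"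
  by (intro measurable_completion) (simp add: borel_measurable_continuous_onI)

lemma fund_box:
  fixes W :: "'a::euclidean_space \<Rightarrow> 'b::{banach,second_countable_topology}"
  assumes int: "set_integrable lebesgue D W"
    and zero: "\<And>\<psi> g. test_fn D \<psi> g \<Longrightarrow> (LINT x:D|lebesgue. \<psi> x *\<^sub>R W x) = 0"
    and sub: "box a b \<subseteq> D"
  shows "(LINT x:box a b|lebesgue. W x) = 0"
proof -
  define V where "V x = indicator D x *\<^sub>R W x" for x
  have intV: "integrable lebesgue V" using int unfolding set_integrable_def V_def .
  then have measV: "V \<in> borel_measurable lebesgue" by (rule borel_measurable_integrable)
  define f where "f x = indicator (box a b) x *\<^sub>R V x" for x
  define s where "s k x = psi k a b x *\<^sub>R V x" for k x
  have "(\<lambda>k. integral\<^sup>L lebesgue (s k)) \<longlonglongrightarrow> integral\<^sup>L lebesgue f"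
  proof (rule integral_dominated_convergence[where w="\<lambda>x. norm (V x)"])
    show "f \<in> borel_measurable lebesgue" unfolding f_def
      by (intro borel_measurable_scaleR measV borel_measurable_indicator) simp
    show "s k \<in> borel_measurable lebesgue" for k unfolding s_def
      by (intro borel_measurable_scaleR measV cont_meas_leb psi_cont)
    show "integrable lebesgue (\<lambda>x. norm (V x))" using intV by (rule integrable_norm)
    show "AE x in lebesgue. (\<lambda>k. s k x) \<longlonglongrightarrow> f x"
    proof (rule AE_I2)
      fix x
      have "eventually (\<lambda>k. s k x = f x) sequentially"
        using psi_lim[of a b x] by eventually_elim (simp add: s_def f_def)
      then show "(\<lambda>k. s k x) \<longlonglongrightarrow> f x" by (rule tendsto_eventually)
    qed
    show "AE x in lebesgue. norm (s k x) \<le> norm (V x)" for k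
    proof (rule AE_I2)
      fix x
      have "\<bar>psi k a b x\<bar> \<le> 1" using psi_bounds[of k a b x] by simp
      have "norm (s k x) = \<bar>psi k a b x\<bar> * norm (V x)" by (simp add: s_def)
      also have "\<dots> \<le> norm (V x)" by (rule mult_left_le_one_le) (use \<open>\<bar>psi k a b x\<bar> \<le> 1\<close> in auto)
      finally show "norm (s k x) \<le> norm (V x)" .
    qed
  qed
  moreover have s0: "integral\<^sup>L lebesgue (s k) = 0" for k
    using zero[OF psi_test[OF sub, of k]] unfolding s_def V_def set_lebesgue_integral_def
    by (simp add: scaleR_scaleR mult.commute)
  ultimately have "(\<lambda>k. 0) \<longlonglongrightarrow> integral\<^sup>L lebesgue f" by (simp only: s0)
  then have "integral\<^sup>L lebesgue f = 0" by (simp add: LIMSEQ_const_iff)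
  moreover have "f = (\<lambda>x. indicator (box a b) x *\<^sub>R W x)"
  proof
    fix x show "f x = indicator (box a b) x *\<^sub>R W x"
      by (cases "x \<in> box a b") (use sub in \<open>auto simp: f_def V_def\<close>)
  qed
  ultimately show ?thesis unfolding set_lebesgue_integral_def by simp
qed

lemma borel_box_sigma: "sets borel = sigma_sets UNIV (range (\<lambda>(a, b). box a b :: 'a::euclidean_space set))"
  by (subst borel_eq_box) simp

lemma sf_leb: "sigma_finite_measure (lebesgue :: 'a::euclidean_space measure)"
proof -
  obtain A :: "'a set set" where A: "countable A" "A \<subseteq> sets lborel" "\<Union>A = space lborel" "\<forall>a\<in>A. emeasure lborel a \<noteq> \<infinity>"
    using lborel.sigma_finite_countable by blast
  show ?thesis unfolding sigma_finite_measure_def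
    by (rule exI[of _ A]) (use A in \<open>auto intro: sets_completionI_sets\<close>)
qed

lemma fund_local:
  fixes W :: "'a::euclidean_space \<Rightarrow> 'b::{banach,second_countable_topology}"
  assumes int: "set_integrable lebesgue D W"
    and zero: "\<And>\<psi> g. test_fn D \<psi> g \<Longrightarrow> (LINT x:D|lebesgue. \<psi> x *\<^sub>R W x) = 0"
    and sub: "box a b \<subseteq> D"
  shows "AE x in lebesgue. x \<in> box a b \<longrightarrow> W x = 0"
proof -
  define f where "f x = indicator (box a b) x *\<^sub>R W x" for x
  have fe: "f x = indicator (box a b) x *\<^sub>R (indicator D x *\<^sub>R W x)" for x
    by (cases "x \<in> box a b") (use sub in \<open>auto simp: f_def\<close>)
  have intf: "integrable lebesgue f"
    unfolding fe using int unfolding set_integrable_def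
    by (intro integrable_mult_indicator[where A="box a b"]) auto
  have measf: "f \<in> borel_measurable lebesgue" using intf by (rule borel_measurable_integrable)
  have boxint: "(LINT x:box c d|lebesgue. f x) = 0" for c d
  proof -
    have "(LINT x:box c d|lebesgue. f x) = (LINT x:box c d \<inter> box a b|lebesgue. W x)"
      unfolding set_lebesgue_integral_def f_def
      by (intro Bochner_Integration.integral_cong refl) (auto simp: indicator_def)
    also have "\<dots> = 0"
    proof -
      have "box c d \<inter> box a b \<subseteq> D" using sub by auto
      then have "box (\<Sum>i\<in>Basis. max (c \<bullet> i) (a \<bullet> i) *\<^sub>R i) (\<Sum>i\<in>Basis. min (d \<bullet> i) (b \<bullet> i) *\<^sub>R i) \<subseteq> D"
        by (simp only: box_Int_box)
      note X = fund_box[OF int zero this]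
      then show ?thesis by (simp only: box_Int_box)
    qed
    finally show ?thesis .
  qed
  have f0: "integral\<^sup>L lebesgue f = 0"
  proof -
    have "(\<lambda>x. indicator (box a b) x *\<^sub>R f x) = f" by (auto simp: f_def indicator_def fun_eq_iff)
    then show ?thesis using boxint[of a b] unfolding set_lebesgue_integral_def by simp
  qed
  let ?G = "range (\<lambda>(a, b). box a b :: 'a set)"
  have Gsets: "A \<in> sigma_sets UNIV ?G \<Longrightarrow> A \<in> sets lebesgue" for A
    using borel_box_sigma[where 'a='a] by (auto intro: sets_completionI_sets)
  have IS: "Int_stable ?G" by (auto simp: Int_stable_def box_Int_box)
  have cl: "?G \<subseteq> Pow UNIV" by auto
  have borelcase: "(LINT x:A|lebesgue. f x) = 0" if "A \<in> sigma_sets UNIV ?G" for A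
  proof (rule sigma_sets_induct_disjoint[OF IS cl that])
    fix A assume "A \<in> ?G" then show "(LINT x:A|lebesgue. f x) = 0" using boxint by auto
  next
    show "(LINT x:{}|lebesgue. f x) = 0" by (simp add: set_lebesgue_integral_def)
  next
    fix A assume hyp: "A \<in> sigma_sets UNIV ?G" and IH: "(LINT x:A|lebesgue. f x) = 0"
    have "(LINT x:UNIV - A|lebesgue. f x) = integral\<^sup>L lebesgue (\<lambda>x. f x - indicator A x *\<^sub>R f x)"
      unfolding set_lebesgue_integral_def
      by (intro Bochner_Integration.integral_cong refl) (auto simp: indicator_def)
    also have "\<dots> = integral\<^sup>L lebesgue f - (LINT x:A|lebesgue. f x)"
      unfolding set_lebesgue_integral_def
      by (intro Bochner_Integration.integral_diff intf integrable_mult_indicator Gsets hyp)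
    finally show "(LINT x:UNIV - A|lebesgue. f x) = 0" using IH f0 by simp
  next
    fix A :: "nat \<Rightarrow> 'a set" assume disj: "disjoint_family A" and rA: "range A \<subseteq> sigma_sets UNIV ?G"
      and IH: "\<And>i. (LINT x:A i|lebesgue. f x) = 0"
    have "(LINT x:(\<Union>i. A i)|lebesgue. f x) = (\<Sum>i. (LINT x:(A i)|lebesgue. f x))"
    proof (rule lebesgue_integral_countable_add)
      show "A i \<in> sets lebesgue" for i using rA Gsets by auto
      show "A i \<inter> A j = {}" if "i \<noteq> j" for i j using disj that by (simp add: disjoint_family_on_def)
      have "(\<Union>i. A i) \<in> sets lebesgue" using rA Gsets by auto
      then show "set_integrable lebesgue (\<Union>i. A i) f"
        unfolding set_integrable_def by (intro integrable_mult_indicator intf)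
    qed
    then show "(LINT x:(\<Union>i. A i)|lebesgue. f x) = 0" using IH by simp
  qed
  have allcase: "(LINT x:A|lebesgue. f x) = 0" if A: "A \<in> sets lebesgue" for A
  proof -
    from sets_completionE[OF A] obtain S N N' where SN: "A = S \<union> N" "N \<subseteq> N'" "N' \<in> null_sets lborel" "S \<in> sets lborel" .
    have Ssig: "S \<in> sigma_sets UNIV ?G" using SN(4) borel_box_sigma[where 'a='a] by simp
    have "AE x in lborel. x \<notin> N'" using SN(3) by (rule AE_not_in)
    then have "AE x in lebesgue. x \<notin> N'" by (rule AE_completion)
    then have "AE x in lebesgue. indicator A x *\<^sub>R f x = indicator S x *\<^sub>R f x"
      by eventually_elim (use SN in \<open>auto simp: indicator_def\<close>)
    then have "(LINT x:A|lebesgue. f x) = (LINT x:S|lebesgue. f x)"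
      unfolding set_lebesgue_integral_def
      by (rule integral_cong_AE[rotated 2]) (use A Gsets[OF Ssig] measf in auto)
    then show ?thesis using borelcase[OF Ssig] by simp
  qed
  have "AE x in lebesgue. f x = 0" by (rule sigma_finite_measure.density_zero[OF sf_leb intf allcase])
  then show ?thesis by eventually_elim (auto simp: f_def)
qed

lemma fund:
  fixes W :: "'a::euclidean_space \<Rightarrow> 'b::{banach,second_countable_topology}"
  assumes D: "open D" and int: "set_integrable lebesgue D W"
    and zero: "\<And>\<psi> g. test_fn D \<psi> g \<Longrightarrow> (LINT x:D|lebesgue. \<psi> x *\<^sub>R W x) = 0"
  shows "AE x in lebesgue. x \<in> D \<longrightarrow> W x = 0"
proof -
  define a' where "a' \<equiv> \<lambda>f :: 'a \<Rightarrow> real \<times> real. (\<Sum>(i::'a)\<in>Basis. fst (f i) *\<^sub>R i)"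
  define b' where "b' \<equiv> \<lambda>f :: 'a \<Rightarrow> real \<times> real. (\<Sum>(i::'a)\<in>Basis. snd (f i) *\<^sub>R i)"
  define I where "I \<equiv> {f\<in>Basis \<rightarrow>\<^sub>E \<rat> \<times> \<rat>. box (a' f) (b' f) \<subseteq> D}"
  have DU: "D = (\<Union>f\<in>I. box (a' f) (b' f))"
    unfolding a'_def b'_def I_def by (rule open_UNION_box[OF D])
  have cI: "countable I"
  proof -
    have "countable (Basis \<rightarrow>\<^sub>E \<rat> \<times> (\<rat>::real set))"
      by (intro countable_PiE finite_Basis countable_SIGMA countable_rat)
    then show ?thesis unfolding I_def by (rule countable_subset[rotated]) auto
  qed
  have "AE x in lebesgue. \<forall>f\<in>I. x \<in> box (a' f) (b' f) \<longrightarrow> W x = 0"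
  proof (rule AE_ball_countable'[OF _ cI])
    fix f assume "f \<in> I"
    then have sub: "box (a' f) (b' f) \<subseteq> D" unfolding I_def by auto
    show "AE x in lebesgue. x \<in> box (a' f) (b' f) \<longrightarrow> W x = 0"
    proof (rule fund_local[of D W])
      show "set_integrable lebesgue D W" by (rule int)
      fix \<psi> g assume "test_fn D \<psi> g" then show "(LINT x:D|lebesgue. \<psi> x *\<^sub>R W x) = 0" by (rule zero)
    qed (rule sub)
  qed
  then show ?thesis
    by eventually_elim (use DU in blast)
qed

lemma wgrad_props: "H1 \<Omega> f \<Longrightarrow> L2v \<Omega> (wgrad \<Omega> f) \<and> is_weak_grad \<Omega> f (wgrad \<Omega> f)"
proof -
  assume "H1 \<Omega> f"
  then have "\<exists>G. L2v \<Omega> G \<and> is_weak_grad \<Omega> f G" by (simp add: H1_def)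
  then show ?thesis unfolding wgrad_def by (rule someI_ex)
qed

lemma cs_sum:
  assumes cs: "closed_subspace_H1 \<Omega> V" and S: "finite S" and f: "\<forall>i\<in>S. f i \<in> V"
  shows "(\<lambda>x. \<Sum>i\<in>S. c i * f i x) \<in> V"
  using S f
proof (induction S rule: finite_induct)
  case empty then show ?case using cs unfolding closed_subspace_H1_def by simp
next
  case (insert i S)
  have add: "\<forall>f\<in>V. \<forall>g\<in>V. (\<lambda>x. f x + g x) \<in> V" and sc: "\<forall>c. \<forall>f\<in>V. (\<lambda>x. c * f x) \<in> V"
    using cs unfolding closed_subspace_H1_def by simp_all
  have fi: "f i \<in> V" using insert.prems by simp
  have a: "(\<lambda>x. c i * f i x) \<in> V" using sc fi by simp
  have b: "(\<lambda>x. \<Sum>i\<in>S. c i * f i x) \<in> V" using insert by simp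
  have "(\<lambda>x. c i * f i x + (\<Sum>i\<in>S. c i * f i x)) \<in> V"
    using add a b by simp
  then show ?case using insert.hyps by simp
qed

lemma abs_le_1_sq: "\<bar>t::real\<bar> \<le> 1 + t^2"
proof (cases "\<bar>t\<bar> \<le> 1")
  case True
  have "0 \<le> t^2" by simp
  then show ?thesis using True by linarith
next
  case False
  then have "\<bar>t\<bar> * 1 \<le> \<bar>t\<bar> * \<bar>t\<bar>" by (intro mult_left_mono) auto
  also have "\<dots> = t^2" by (simp add: power2_eq_square abs_mult_self_eq)
  finally show ?thesis by simp
qed

lemma L2_int_mult:
  fixes h :: "'a::euclidean_space \<Rightarrow> 'b::{banach,second_countable_topology}"
  assumes L: "L2 \<Omega> f" and O: "\<Omega> \<in> lmeasurable" and h: "h \<in> borel_measurable lebesgue"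
    and hb: "\<And>x. x \<in> \<Omega> \<Longrightarrow> norm (h x) \<le> C" and C: "0 \<le> C"
  shows "set_integrable lebesgue \<Omega> (\<lambda>x. f x *\<^sub>R h x)"
  unfolding set_integrable_def
proof (rule Bochner_Integration.integrable_bound)
  have i1: "integrable lebesgue (indicat_real \<Omega>)" using O by (simp add: lmeasurable_iff_integrable)
  have i2: "integrable lebesgue (\<lambda>x. indicator \<Omega> x * (f x)^2)" using L unfolding L2_def set_integrable_def by simp
  show "integrable lebesgue (\<lambda>x. C * (indicator \<Omega> x + indicator \<Omega> x * (f x)^2))"
    by (intro integrable_mult_right Bochner_Integration.integrable_add i1 i2)
  have m: "(\<lambda>x. indicator \<Omega> x *\<^sub>R f x) \<in> borel_measurable lebesgue" using L unfolding L2_def set_borel_measurable_def by blast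
  have "(\<lambda>x. (indicator \<Omega> x *\<^sub>R f x) *\<^sub>R h x) \<in> borel_measurable lebesgue"
    by (intro borel_measurable_scaleR m h)
  then show "(\<lambda>x. indicat_real \<Omega> x *\<^sub>R f x *\<^sub>R h x) \<in> borel_measurable lebesgue" by simp
  show "AE x in lebesgue. norm (indicat_real \<Omega> x *\<^sub>R f x *\<^sub>R h x) \<le> norm (C * (indicator \<Omega> x + indicator \<Omega> x * (f x)^2))"
  proof (rule AE_I2)
    fix x show "norm (indicat_real \<Omega> x *\<^sub>R f x *\<^sub>R h x) \<le> norm (C * (indicator \<Omega> x + indicator \<Omega> x * (f x)^2))"
    proof (cases "x \<in> \<Omega>")
      case True
      have "norm (indicat_real \<Omega> x *\<^sub>R f x *\<^sub>R h x) = \<bar>f x\<bar> * norm (h x)" using True by simp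
      also have "\<dots> \<le> (1 + (f x)^2) * C" using hb[OF True] abs_le_1_sq[of "f x"] C
        by (intro mult_mono) auto
      also have "\<dots> = norm (C * (indicator \<Omega> x + indicator \<Omega> x * (f x)^2))" using True C
        by (simp add: algebra_simps)
      finally show ?thesis .
    qed simp
  qed
qed

lemma L2v_int_mult:
  fixes h :: "'a::euclidean_space \<Rightarrow> real"
  assumes L: "L2v \<Omega> G" and O: "\<Omega> \<in> lmeasurable" and h: "h \<in> borel_measurable lebesgue"
    and hb: "\<And>x. x \<in> \<Omega> \<Longrightarrow> \<bar>h x\<bar> \<le> C" and C: "0 \<le> C"
  shows "set_integrable lebesgue \<Omega> (\<lambda>x. h x *\<^sub>R G x)"
  unfolding set_integrable_def
proof (rule Bochner_Integration.integrable_bound)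
  have i1: "integrable lebesgue (indicat_real \<Omega>)" using O by (simp add: lmeasurable_iff_integrable)
  have i2: "integrable lebesgue (\<lambda>x. indicator \<Omega> x * (norm (G x))^2)" using L unfolding L2v_def set_integrable_def by simp
  show "integrable lebesgue (\<lambda>x. C * (indicator \<Omega> x + indicator \<Omega> x * (norm (G x))^2))"
    by (intro integrable_mult_right Bochner_Integration.integrable_add i1 i2)
  have m: "(\<lambda>x. indicator \<Omega> x *\<^sub>R G x) \<in> borel_measurable lebesgue" using L unfolding L2v_def set_borel_measurable_def by blast
  have "(\<lambda>x. h x *\<^sub>R (indicator \<Omega> x *\<^sub>R G x)) \<in> borel_measurable lebesgue"
    by (intro borel_measurable_scaleR m h)
  then show "(\<lambda>x. indicat_real \<Omega> x *\<^sub>R h x *\<^sub>R G x) \<in> borel_measurable lebesgue" by (simp add: scaleR_scaleR mult.commute)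
  show "AE x in lebesgue. norm (indicat_real \<Omega> x *\<^sub>R h x *\<^sub>R G x) \<le> norm (C * (indicator \<Omega> x + indicator \<Omega> x * (norm (G x))^2))"
  proof (rule AE_I2)
    fix x show "norm (indicat_real \<Omega> x *\<^sub>R h x *\<^sub>R G x) \<le> norm (C * (indicator \<Omega> x + indicator \<Omega> x * (norm (G x))^2))"
    proof (cases "x \<in> \<Omega>")
      case True
      have "norm (indicat_real \<Omega> x *\<^sub>R h x *\<^sub>R G x) = \<bar>h x\<bar> * norm (G x)" using True by simp
      also have "\<dots> \<le> C * (1 + (norm (G x))^2)" using hb[OF True] abs_le_1_sq[of "norm (G x)"] C
        by (intro mult_mono) auto
      also have "\<dots> = norm (C * (indicator \<Omega> x + indicator \<Omega> x * (norm (G x))^2))" using True C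
        by (simp add: algebra_simps)
      finally show ?thesis .
    qed simp
  qed
qed

lemma piece:
  assumes H: "H1 \<Omega> f" and O: "\<Omega> \<in> lmeasurable" "bounded \<Omega>" and gs: "grad_supp_in \<Omega> f T"
    and t: "test_fn \<Omega> \<psi> g" and disj: "closure {x. \<psi> x \<noteq> 0} \<inter> T = {}"
  shows "set_integrable lebesgue \<Omega> (\<lambda>x. f x *\<^sub>R g x) \<and> (LINT x:\<Omega>|lebesgue. f x *\<^sub>R g x) = 0"
proof
  have gc: "continuous_on UNIV g" using t unfolding test_fn_def by simp
  have "compact (g ` closure \<Omega>)"
  proof -
    have "compact (closure \<Omega>)" using O(2) by (simp only: compact_closure)
    then show ?thesis by (rule compact_continuous_image[OF continuous_on_subset[OF gc subset_UNIV]])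
  qed
  then have "bounded (g ` closure \<Omega>)" by (rule compact_imp_bounded)
  then obtain C where C: "C > 0" "\<forall>y\<in>g ` closure \<Omega>. norm y \<le> C"
    unfolding bounded_pos by blast
  have Cb: "\<And>x. x \<in> \<Omega> \<Longrightarrow> norm (g x) \<le> C" using C(2) closure_subset by auto
  have L: "L2 \<Omega> f" using H unfolding H1_def by simp
  show "set_integrable lebesgue \<Omega> (\<lambda>x. f x *\<^sub>R g x)"
    by (rule L2_int_mult[OF L O(1) cont_meas_leb[OF gc] Cb]) (use C in auto)
  have wg: "is_weak_grad \<Omega> f (wgrad \<Omega> f)" using wgrad_props[OF H] by simp
  have e1: "(LINT x:\<Omega>|lebesgue. f x *\<^sub>R g x) = - (LINT x:\<Omega>|lebesgue. \<psi> x *\<^sub>R wgrad \<Omega> f x)"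
  proof -
    have "\<forall>\<psi> g. test_fn \<Omega> \<psi> g \<longrightarrow> (LINT x:\<Omega>|lebesgue. f x *\<^sub>R g x) = - (LINT x:\<Omega>|lebesgue. \<psi> x *\<^sub>R wgrad \<Omega> f x)"
      using wg by (simp only: is_weak_grad_def)
    from this[rule_format, OF t] show ?thesis .
  qed
  have e2: "(LINT x:\<Omega>|lebesgue. \<psi> x *\<^sub>R wgrad \<Omega> f x) = 0"
    unfolding set_lebesgue_integral_def
  proof (rule integral_eq_zero_AE)
    have AE1: "AE x in lebesgue. x \<in> \<Omega> - T \<longrightarrow> wgrad \<Omega> f x = 0" using gs unfolding grad_supp_in_def .
    have pt: "indicator \<Omega> x *\<^sub>R (\<psi> x *\<^sub>R wgrad \<Omega> f x) = 0" if a: "x \<in> \<Omega> - T \<longrightarrow> wgrad \<Omega> f x = 0" for x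
    proof (cases "x \<in> \<Omega>")
      case False then show ?thesis by simp
    next
      case True
      show ?thesis
      proof (cases "\<psi> x = 0")
        case True then show ?thesis by simp
      next
        case False
        then have "x \<in> {x. \<psi> x \<noteq> 0}" by simp
        then have "x \<in> closure {x. \<psi> x \<noteq> 0}" by (rule subsetD[OF closure_subset])
        then have "x \<notin> T" using disj by auto
        then have "wgrad \<Omega> f x = 0" using a \<open>x \<in> \<Omega>\<close> by simp
        then show ?thesis by simp
      qed
    qed
    show "AE x in lebesgue. indicator \<Omega> x *\<^sub>R (\<psi> x *\<^sub>R wgrad \<Omega> f x) = 0"
      using AE1 by (rule eventually_mono) (rule pt)
  qed
  show "(LINT x:\<Omega>|lebesgue. f x *\<^sub>R g x) = 0" using e1 e2 by simp
qed

theorem proposition1: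
  fixes \<Omega> :: "'a::euclidean_space set" and M K :: nat and A0 A :: "nat \<Rightarrow> 'a set"
    and u0hat uhat :: "nat \<Rightarrow> real" and muhat :: "real \<Rightarrow> real \<Rightarrow> real"
    and V :: "real \<Rightarrow> ('a \<Rightarrow> real) set" and chi0 chi :: "real \<Rightarrow> nat \<Rightarrow> 'a \<Rightarrow> real"
    and \<eta> \<epsilon> \<delta> :: real and J :: "nat set" and lam :: "nat \<Rightarrow> real" and phi :: "nat \<Rightarrow> 'a \<Rightarrow> real"
  defines "V0 \<equiv> \<lambda>t. V t \<inter> {f. H10 \<Omega> f}"
    and "ud \<equiv> \<lambda>t x. (\<Sum>m\<in>{1..M}. u0hat m * chi0 t m x) + (\<Sum>k\<in>{1..K}. uhat k * chi t k x)"
  assumes dom: "bounded \<Omega>" "connected \<Omega>" "\<Omega> \<noteq> {}" "lipschitz_domain \<Omega>"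
    and weight: "\<forall>e>0. muhat e 0 = 1 / e \<and> (\<forall>s t. 0 \<le> s \<longrightarrow> s \<le> t \<longrightarrow> muhat e t \<le> muhat e s)
                   \<and> (\<forall>t\<ge>0. muhat e t > 0 \<and> t * muhat e t \<le> 1)"
    and A0: "\<forall>m\<in>{1..M}. open (A0 m) \<and> connected (A0 m) \<and>
               hausdorff (DIM('a) - 1) (frontier (A0 m) \<inter> frontier \<Omega>) > 0"
      "\<forall>m\<in>{1..M}. \<forall>n\<in>{1..M}. m \<noteq> n \<longrightarrow> A0 m \<inter> A0 n = {}"
      "closure \<Omega> \<subseteq> closure (\<Union>m\<in>{1..M}. A0 m)"
    and A: "\<forall>k\<in>{1..K}. uhat k \<noteq> 0 \<and> open (A k) \<and> connected (A k) \<and>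
              compact (closure (A k)) \<and> closure (A k) \<subseteq> \<Omega> - Sset \<Omega> M A0"
      "\<forall>k\<in>{1..K}. \<forall>j\<in>{1..K}. k \<noteq> j \<longrightarrow> frontier (A k) \<inter> frontier (A j) = {}"
    and V: "\<forall>t>0. closed_subspace_H1 \<Omega> (V t)"
      "\<forall>t>0. \<forall>m\<in>{1..M}. chi0 t m \<in> V t"
      "\<forall>t>0. \<forall>k\<in>{1..K}. chi t k \<in> V0 t"
      "\<forall>m\<in>{1..M}. ((\<lambda>t. LINT x:\<Omega>|lebesgue. (chi0 t m x - indicator (A0 m) x)^2) \<longlongrightarrow> 0) (at_right 0)"
      "\<forall>k\<in>{1..K}. ((\<lambda>t. LINT x:\<Omega>|lebesgue. (chi t k x - indicator (A k) x)^2) \<longlongrightarrow> 0) (at_right 0)"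
    and eta: "\<eta> > 0" "\<forall>k\<in>{1..K}. Adel \<Omega> A k \<eta> \<noteq> {}"
      "closure (Sdel \<Omega> M A0 \<eta>) \<inter> closure (Uall \<Omega> K A \<eta>) = {}"
      "\<forall>k\<in>{1..K}. \<forall>j\<in>{1..K}. k \<noteq> j \<longrightarrow> closure (Udel \<Omega> A k \<eta>) \<inter> closure (Udel \<Omega> A j \<eta>) = {}"
      "\<forall>E\<in>components (Ddel \<Omega> M A0 K A \<eta> - Aall \<Omega> K A \<eta>). hausdorff (DIM('a) - 1) (frontier E \<inter> frontier \<Omega>) > 0"
      "\<forall>t. 0 < t \<and> t \<le> \<eta> \<longrightarrow>
         (\<forall>m\<in>{1..M}. grad_Linf \<Omega> (chi0 t m) \<and> grad_supp_in \<Omega> (chi0 t m) (closure (Sdel \<Omega> M A0 t))) \<and>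
         (\<forall>k\<in>{1..K}. grad_Linf \<Omega> (chi t k) \<and> grad_supp_in \<Omega> (chi t k) (closure (Udel \<Omega> A k t)))"
    and eps: "\<epsilon> > 0"
    and del: "0 < \<delta>" "\<delta> \<le> \<eta>"
    and eig: "eigen_seq \<Omega> (V0 \<delta>) (bilin \<Omega> (muhat \<epsilon>) (ud \<delta>)) J lam phi"
  shows "\<forall>j\<in>J. (LINT x:Ddel \<Omega> M A0 K A \<delta>|lebesgue. (norm (wgrad \<Omega> (phi j) x))^2) \<le> lam j * \<epsilon>"
proof -
  have Oopen: "open \<Omega>" using dom(4) unfolding lipschitz_domain_def by simp
  have Oleb: "\<Omega> \<in> sets lebesgue" using Oopen by (intro sets_completionI_sets) (simp add: borel_open)
  have Olm: "\<Omega> \<in> lmeasurable" by (rule bounded_set_imp_lmeasurable[OF dom(1) Oleb])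
  define Dd where "Dd = Ddel \<Omega> M A0 K A \<delta>"
  have DdO: "Dd \<subseteq> \<Omega>" by (auto simp: Dd_def Ddel_def)
  have Dopen: "open Dd" unfolding Dd_def Ddel_def using Oopen by (intro open_Diff closed_closure)
  have Dleb: "Dd \<in> sets lebesgue" using Dopen by (intro sets_completionI_sets) (simp add: borel_open)
  have DS: "Dd \<inter> closure (Sdel \<Omega> M A0 \<delta>) = {}"
    using closure_mono[of "Sdel \<Omega> M A0 \<delta>" "Uall \<Omega> K A \<delta> \<union> Sdel \<Omega> M A0 \<delta>"] by (auto simp: Dd_def Ddel_def)
  have DU: "Dd \<inter> closure (Udel \<Omega> A k \<delta>) = {}" if k: "k \<in> {1..K}" for k
  proof -
    have "Udel \<Omega> A k \<delta> \<subseteq> Uall \<Omega> K A \<delta> \<union> Sdel \<Omega> M A0 \<delta>" using k by (auto simp: Uall_def)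
    then have "closure (Udel \<Omega> A k \<delta>) \<subseteq> closure (Uall \<Omega> K A \<delta> \<union> Sdel \<Omega> M A0 \<delta>)" by (rule closure_mono)
    then show ?thesis by (auto simp: Dd_def Ddel_def)
  qed
  have cs: "closed_subspace_H1 \<Omega> (V \<delta>)" using V(1) del(1) by simp
  have VH1: "H1 \<Omega> f" if "f \<in> V \<delta>" for f using cs that unfolding closed_subspace_H1_def by auto
  have chi0V: "\<forall>m\<in>{1..M}. chi0 \<delta> m \<in> V \<delta>" using V(2) del(1) by simp
  have chiV: "\<forall>k\<in>{1..K}. chi \<delta> k \<in> V \<delta>" using V(3) del(1) unfolding V0_def by simp
  have gsupp: "(\<forall>m\<in>{1..M}. grad_Linf \<Omega> (chi0 \<delta> m) \<and> grad_supp_in \<Omega> (chi0 \<delta> m) (closure (Sdel \<Omega> M A0 \<delta>))) \<and>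
         (\<forall>k\<in>{1..K}. grad_Linf \<Omega> (chi \<delta> k) \<and> grad_supp_in \<Omega> (chi \<delta> k) (closure (Udel \<Omega> A k \<delta>)))"
    using eta(6) del by blast
  have udeq: "ud \<delta> = (\<lambda>x. (\<Sum>m\<in>{1..M}. u0hat m * chi0 \<delta> m x) + (\<Sum>k\<in>{1..K}. uhat k * chi \<delta> k x))"
    by (simp add: ud_def)
  have uV: "ud \<delta> \<in> V \<delta>"
  proof -
    have a: "(\<lambda>x. \<Sum>m\<in>{1..M}. u0hat m * chi0 \<delta> m x) \<in> V \<delta>" by (rule cs_sum[OF cs finite_atLeastAtMost chi0V])
    have b: "(\<lambda>x. \<Sum>k\<in>{1..K}. uhat k * chi \<delta> k x) \<in> V \<delta>" by (rule cs_sum[OF cs finite_atLeastAtMost chiV])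
    have add: "\<forall>f\<in>V \<delta>. \<forall>g\<in>V \<delta>. (\<lambda>x. f x + g x) \<in> V \<delta>" using cs unfolding closed_subspace_H1_def by simp
    show ?thesis unfolding udeq using add[rule_format, OF a b] by simp
  qed
  define W where "W = wgrad \<Omega> (ud \<delta>)"
  have WL2: "L2v \<Omega> W" and Wwg: "is_weak_grad \<Omega> (ud \<delta>) W"
    using wgrad_props[OF VH1[OF uV]] unfolding W_def by auto
  have zeroD: "(LINT x:Dd|lebesgue. \<psi> x *\<^sub>R W x) = 0" if t: "test_fn Dd \<psi> g" for \<psi> g
  proof -
    have tO: "test_fn \<Omega> \<psi> g" using t DdO unfolding test_fn_def by auto
    have cl: "closure {x. \<psi> x \<noteq> 0} \<subseteq> Dd" using t unfolding test_fn_def by auto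
    have p0: "set_integrable lebesgue \<Omega> (\<lambda>x. chi0 \<delta> m x *\<^sub>R g x) \<and> (LINT x:\<Omega>|lebesgue. chi0 \<delta> m x *\<^sub>R g x) = 0"
      if m: "m \<in> {1..M}" for m
      by (rule piece[OF VH1 Olm dom(1) _ tO]) (use m chi0V gsupp cl DS in auto)
    have p1: "set_integrable lebesgue \<Omega> (\<lambda>x. chi \<delta> k x *\<^sub>R g x) \<and> (LINT x:\<Omega>|lebesgue. chi \<delta> k x *\<^sub>R g x) = 0"
      if k: "k \<in> {1..K}" for k
      by (rule piece[OF VH1 Olm dom(1) _ tO]) (use k chiV gsupp cl DU[OF k] in auto)
    have e1: "(\<lambda>x. indicator \<Omega> x *\<^sub>R (ud \<delta> x *\<^sub>R g x)) =
      (\<lambda>x. (\<Sum>m\<in>{1..M}. u0hat m *\<^sub>R (indicator \<Omega> x *\<^sub>R (chi0 \<delta> m x *\<^sub>R g x))) +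
           (\<Sum>k\<in>{1..K}. uhat k *\<^sub>R (indicator \<Omega> x *\<^sub>R (chi \<delta> k x *\<^sub>R g x))))"
      by (rule ext) (simp add: udeq scaleR_add_left scaleR_add_right scaleR_sum_left scaleR_sum_right mult.left_commute)
    have i0: "integrable lebesgue (\<lambda>x. indicator \<Omega> x *\<^sub>R (chi0 \<delta> m x *\<^sub>R g x))" if "m \<in> {1..M}" for m
      using p0[OF that] unfolding set_integrable_def by simp
    have i1: "integrable lebesgue (\<lambda>x. indicator \<Omega> x *\<^sub>R (chi \<delta> k x *\<^sub>R g x))" if "k \<in> {1..K}" for k
      using p1[OF that] unfolding set_integrable_def by simp
    have z0: "integral\<^sup>L lebesgue (\<lambda>x. indicator \<Omega> x *\<^sub>R (chi0 \<delta> m x *\<^sub>R g x)) = 0" if "m \<in> {1..M}" for m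
      using p0[OF that] unfolding set_lebesgue_integral_def by simp
    have z1: "integral\<^sup>L lebesgue (\<lambda>x. indicator \<Omega> x *\<^sub>R (chi \<delta> k x *\<^sub>R g x)) = 0" if "k \<in> {1..K}" for k
      using p1[OF that] unfolding set_lebesgue_integral_def by simp
    define F0 where "F0 m x = indicator \<Omega> x *\<^sub>R (chi0 \<delta> m x *\<^sub>R g x)" for m x
    define F1 where "F1 k x = indicator \<Omega> x *\<^sub>R (chi \<delta> k x *\<^sub>R g x)" for k x
    have i0': "integrable lebesgue (\<lambda>x. u0hat m *\<^sub>R F0 m x)" if "m \<in> {1..M}" for m
      using integrable_scaleR_right[OF i0[OF that], of "u0hat m"] unfolding F0_def .
    have i1': "integrable lebesgue (\<lambda>x. uhat k *\<^sub>R F1 k x)" if "k \<in> {1..K}" for k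
      using integrable_scaleR_right[OF i1[OF that], of "uhat k"] unfolding F1_def .
    have I0: "integrable lebesgue (\<lambda>x. \<Sum>m\<in>{1..M}. u0hat m *\<^sub>R F0 m x)"
      by (rule Bochner_Integration.integrable_sum) (rule i0')
    have I1: "integrable lebesgue (\<lambda>x. \<Sum>k\<in>{1..K}. uhat k *\<^sub>R F1 k x)"
      by (rule Bochner_Integration.integrable_sum) (rule i1')
    have "(LINT x:\<Omega>|lebesgue. ud \<delta> x *\<^sub>R g x) =
       integral\<^sup>L lebesgue (\<lambda>x. (\<Sum>m\<in>{1..M}. u0hat m *\<^sub>R F0 m x) + (\<Sum>k\<in>{1..K}. uhat k *\<^sub>R F1 k x))"
      unfolding set_lebesgue_integral_def e1 F0_def F1_def ..
    also have "\<dots> = integral\<^sup>L lebesgue (\<lambda>x. \<Sum>m\<in>{1..M}. u0hat m *\<^sub>R F0 m x) + integral\<^sup>L lebesgue (\<lambda>x. \<Sum>k\<in>{1..K}. uhat k *\<^sub>R F1 k x)"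
      by (rule Bochner_Integration.integral_add[OF I0 I1])
    also have "integral\<^sup>L lebesgue (\<lambda>x. \<Sum>m\<in>{1..M}. u0hat m *\<^sub>R F0 m x) = (\<Sum>m\<in>{1..M}. integral\<^sup>L lebesgue (\<lambda>x. u0hat m *\<^sub>R F0 m x))"
      by (rule Bochner_Integration.integral_sum) (rule i0')
    also have "integral\<^sup>L lebesgue (\<lambda>x. \<Sum>k\<in>{1..K}. uhat k *\<^sub>R F1 k x) = (\<Sum>k\<in>{1..K}. integral\<^sup>L lebesgue (\<lambda>x. uhat k *\<^sub>R F1 k x))"
      by (rule Bochner_Integration.integral_sum) (rule i1')
    also have "(\<Sum>m\<in>{1..M}. integral\<^sup>L lebesgue (\<lambda>x. u0hat m *\<^sub>R F0 m x)) + (\<Sum>k\<in>{1..K}. integral\<^sup>L lebesgue (\<lambda>x. uhat k *\<^sub>R F1 k x)) = 0"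
    proof -
      have z0': "integral\<^sup>L lebesgue (\<lambda>x. u0hat m *\<^sub>R F0 m x) = 0" if "m \<in> {1..M}" for m
        using z0[OF that] unfolding F0_def by (simp only: Bochner_Integration.integral_scaleR_right scaleR_zero_right)
      have z1': "integral\<^sup>L lebesgue (\<lambda>x. uhat k *\<^sub>R F1 k x) = 0" if "k \<in> {1..K}" for k
        using z1[OF that] unfolding F1_def by (simp only: Bochner_Integration.integral_scaleR_right scaleR_zero_right)
      have "(\<Sum>m\<in>{1..M}. integral\<^sup>L lebesgue (\<lambda>x. u0hat m *\<^sub>R F0 m x)) = 0"
        by (rule sum.neutral) (use z0' in blast)
      moreover have "(\<Sum>k\<in>{1..K}. integral\<^sup>L lebesgue (\<lambda>x. uhat k *\<^sub>R F1 k x)) = 0"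
        by (rule sum.neutral) (use z1' in blast)
      ultimately show ?thesis by simp
    qed
    finally have uz: "(LINT x:\<Omega>|lebesgue. ud \<delta> x *\<^sub>R g x) = 0" .
    have "\<forall>\<psi> g. test_fn \<Omega> \<psi> g \<longrightarrow> (LINT x:\<Omega>|lebesgue. ud \<delta> x *\<^sub>R g x) = - (LINT x:\<Omega>|lebesgue. \<psi> x *\<^sub>R W x)"
      using Wwg by (simp only: is_weak_grad_def)
    from this[rule_format, OF tO] uz have oz: "(LINT x:\<Omega>|lebesgue. \<psi> x *\<^sub>R W x) = 0" by simp
    have "(\<lambda>x. indicator Dd x *\<^sub>R (\<psi> x *\<^sub>R W x)) = (\<lambda>x. indicator \<Omega> x *\<^sub>R (\<psi> x *\<^sub>R W x))"
    proof
      fix x show "indicator Dd x *\<^sub>R (\<psi> x *\<^sub>R W x) = indicator \<Omega> x *\<^sub>R (\<psi> x *\<^sub>R W x)"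
      proof (cases "\<psi> x = 0")
        case False
        then have "x \<in> closure {x. \<psi> x \<noteq> 0}" by (intro subsetD[OF closure_subset]) simp
        then have "x \<in> Dd" "x \<in> \<Omega>" using cl DdO by auto
        then show ?thesis by simp
      qed simp
    qed
    then show ?thesis using oz unfolding set_lebesgue_integral_def by simp
  qed
  have WintO: "set_integrable lebesgue \<Omega> (\<lambda>x. 1 *\<^sub>R W x)"
    by (rule L2v_int_mult[OF WL2 Olm]) auto
  have WintD: "set_integrable lebesgue Dd W"
    using set_integrable_subset[OF _ Dleb DdO] WintO by simp
  have AEW: "AE x in lebesgue. x \<in> Dd \<longrightarrow> W x = 0"
  proof (rule fund[OF Dopen WintD])
    fix \<psi> g assume "test_fn Dd \<psi> g" then show "(LINT x:Dd|lebesgue. \<psi> x *\<^sub>R W x) = 0" by (rule zeroD)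
  qed
  show ?thesis
  proof
    fix j assume j: "j \<in> J"
    have e1: "\<forall>j\<in>J. phi j \<in> V0 \<delta> \<and> (\<forall>v\<in>V0 \<delta>. bilin \<Omega> (muhat \<epsilon>) (ud \<delta>) (phi j) v = lam j * l2inner \<Omega> (phi j) v)"
      using eig unfolding eigen_seq_def by (elim conjE)
    have e2: "\<forall>i\<in>J. \<forall>j\<in>J. l2inner \<Omega> (phi i) (phi j) = (if i = j then 1 else 0)"
      using eig unfolding eigen_seq_def by (elim conjE)
    have pV0: "phi j \<in> V0 \<delta>" using e1 j by blast
    have "bilin \<Omega> (muhat \<epsilon>) (ud \<delta>) (phi j) (phi j) = lam j * l2inner \<Omega> (phi j) (phi j)"
      using e1 j pV0 by blast
    moreover have "l2inner \<Omega> (phi j) (phi j) = 1" using e2 j by simp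
    ultimately have bil: "bilin \<Omega> (muhat \<epsilon>) (ud \<delta>) (phi j) (phi j) = lam j" by simp
    have pH1: "H1 \<Omega> (phi j)" using pV0 VH1 unfolding V0_def by blast
    define P where "P = wgrad \<Omega> (phi j)"
    have PL2: "L2v \<Omega> P" using wgrad_props[OF pH1] unfolding P_def by simp
    have w: "muhat \<epsilon> 0 = 1 / \<epsilon> \<and> (\<forall>s t. 0 \<le> s \<longrightarrow> s \<le> t \<longrightarrow> muhat \<epsilon> t \<le> muhat \<epsilon> s)
                   \<and> (\<forall>t\<ge>0. muhat \<epsilon> t > 0 \<and> t * muhat \<epsilon> t \<le> 1)" using weight eps by blast
    have mu0: "muhat \<epsilon> 0 = 1 / \<epsilon>" using w by simp
    have mupos: "0 < muhat \<epsilon> t" if "0 \<le> t" for t using w that by simp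
    have muanti: "muhat \<epsilon> t \<le> muhat \<epsilon> s" if "0 \<le> s" "s \<le> t" for s t using w that by blast
    have mule: "muhat \<epsilon> t \<le> 1 / \<epsilon>" if "0 \<le> t" for t using muanti[of 0 t] that mu0 by simp
    define mu' where "mu' t = muhat \<epsilon> (max 0 t)" for t
    have "mono (\<lambda>t. - mu' t)" unfolding mono_def mu'_def
    proof (intro allI impI)
      fix s t :: real assume "s \<le> t"
      then show "- muhat \<epsilon> (max 0 s) \<le> - muhat \<epsilon> (max 0 t)" using muanti[of "max 0 s" "max 0 t"] by simp
    qed
    then have "(\<lambda>t. - mu' t) \<in> borel_measurable borel" by (rule borel_measurable_mono)
    then have "(\<lambda>t. - (- mu' t)) \<in> borel_measurable borel" by (rule borel_measurable_uminus)
    then have mu'meas: "mu' \<in> borel_measurable borel" by simp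
    define F where "F x = indicator \<Omega> x * (muhat \<epsilon> (norm (W x)) * (norm (P x))^2)" for x
    have Falt: "F = (\<lambda>x. mu' (norm (indicator \<Omega> x *\<^sub>R W x)) * (norm (indicator \<Omega> x *\<^sub>R P x))^2)"
    proof
      fix x show "F x = mu' (norm (indicator \<Omega> x *\<^sub>R W x)) * (norm (indicator \<Omega> x *\<^sub>R P x))^2"
        by (cases "x \<in> \<Omega>") (auto simp: F_def mu'_def)
    qed
    have mW: "(\<lambda>x. indicator \<Omega> x *\<^sub>R W x) \<in> borel_measurable lebesgue"
      using WL2 unfolding L2v_def set_borel_measurable_def by blast
    have mP: "(\<lambda>x. indicator \<Omega> x *\<^sub>R P x) \<in> borel_measurable lebesgue"
      using PL2 unfolding L2v_def set_borel_measurable_def by blast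
    have Fmeas: "F \<in> borel_measurable lebesgue"
    proof -
      have a: "(\<lambda>x. mu' (norm (indicator \<Omega> x *\<^sub>R W x))) \<in> borel_measurable lebesgue"
        by (rule measurable_compose[OF measurable_compose[OF mW borel_measurable_norm] mu'meas])
      have b: "(\<lambda>x. (norm (indicator \<Omega> x *\<^sub>R P x))^2) \<in> borel_measurable lebesgue"
        by (intro borel_measurable_power measurable_compose[OF mP borel_measurable_norm])
      show ?thesis unfolding Falt by (rule borel_measurable_times[OF a b])
    qed
    have Fnn: "0 \<le> F x" for x unfolding F_def using mupos[of "norm (W x)"] by simp
    have Fb: "F x \<le> (1/\<epsilon>) * (indicator \<Omega> x * (norm (P x))^2)" for x
    proof (cases "x \<in> \<Omega>")
      case True
      have "muhat \<epsilon> (norm (W x)) * (norm (P x))^2 \<le> (1/\<epsilon>) * (norm (P x))^2"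
        by (rule mult_right_mono[OF mule]) auto
      then show ?thesis using True by (simp add: F_def)
    qed (simp add: F_def)
    have Pint: "integrable lebesgue (\<lambda>x. indicator \<Omega> x * (norm (P x))^2)"
      using PL2 unfolding L2v_def set_integrable_def by simp
    have Fint: "integrable lebesgue F"
    proof (rule Bochner_Integration.integrable_bound[OF integrable_mult_right[OF Pint, of "1/\<epsilon>"] Fmeas])
      show "AE x in lebesgue. norm (F x) \<le> norm (1/\<epsilon> * (indicator \<Omega> x * (norm (P x))^2))"
      proof (rule AE_I2)
        fix x have "0 \<le> 1/\<epsilon> * (indicator \<Omega> x * (norm (P x))^2)" using eps by simp
        then show "norm (F x) \<le> norm (1/\<epsilon> * (indicator \<Omega> x * (norm (P x))^2))" using Fnn[of x] Fb[of x] eps by simp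
      qed
    qed
    have bilF: "bilin \<Omega> (muhat \<epsilon>) (ud \<delta>) (phi j) (phi j) = integral\<^sup>L lebesgue F"
      unfolding bilin_def set_lebesgue_integral_def F_def W_def P_def by (simp add: power2_norm_eq_inner)
    have L1: "integrable lebesgue (\<lambda>x. indicator Dd x * (norm (P x))^2)"
    proof -
      have "integrable lebesgue (\<lambda>x. (indicator \<Omega> x * (norm (P x))^2) * indicator Dd x)"
        by (rule integrable_real_mult_indicator[OF Dleb Pint])
      moreover have "(\<lambda>x. (indicator \<Omega> x * (norm (P x))^2) * indicator Dd x) = (\<lambda>x. indicator Dd x * (norm (P x))^2)"
        using DdO by (auto simp: indicator_def fun_eq_iff)
      ultimately show ?thesis by simp
    qed
    have G: "integrable lebesgue (\<lambda>x. indicator Dd x * F x)"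
      using integrable_real_mult_indicator[OF Dleb Fint] by (simp add: mult.commute)
    have AEeq: "AE x in lebesgue. indicator Dd x * (norm (P x))^2 = \<epsilon> * (indicator Dd x * F x)"
      using AEW
    proof (rule eventually_mono)
      fix x assume a: "x \<in> Dd \<longrightarrow> W x = 0"
      show "indicator Dd x * (norm (P x))^2 = \<epsilon> * (indicator Dd x * F x)"
      proof (cases "x \<in> Dd")
        case True
        then have "x \<in> \<Omega>" "W x = 0" using a DdO by auto
        then have "F x = (1/\<epsilon>) * (norm (P x))^2" by (simp add: F_def mu0)
        then show ?thesis using True eps by simp
      qed simp
    qed
    have "(LINT x:Dd|lebesgue. (norm (P x))^2) = integral\<^sup>L lebesgue (\<lambda>x. indicator Dd x * (norm (P x))^2)"
      unfolding set_lebesgue_integral_def by simp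
    also have "\<dots> = integral\<^sup>L lebesgue (\<lambda>x. \<epsilon> * (indicator Dd x * F x))"
      by (rule integral_cong_AE[OF borel_measurable_integrable[OF L1] _ AEeq])
        (intro borel_measurable_times borel_measurable_const borel_measurable_integrable[OF G])
    also have "\<dots> = \<epsilon> * integral\<^sup>L lebesgue (\<lambda>x. indicator Dd x * F x)" by simp
    also have "\<dots> \<le> \<epsilon> * integral\<^sup>L lebesgue F"
    proof (rule mult_left_mono)
      show "integral\<^sup>L lebesgue (\<lambda>x. indicator Dd x * F x) \<le> integral\<^sup>L lebesgue F"
      proof (rule integral_mono[OF G Fint])
        fix x show "indicator Dd x * F x \<le> F x" using Fnn[of x] by (simp add: indicator_def)
      qed
    qed (use eps in simp)
    also have "\<dots> = lam j * \<epsilon>" using bilF bil by simp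
    finally show "(LINT x:Ddel \<Omega> M A0 K A \<delta>|lebesgue. (norm (wgrad \<Omega> (phi j) x))^2) \<le> lam j * \<epsilon>"
      unfolding Dd_def P_def .
  qed
qed

end
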